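(* Fix $p\in(0,1)$ and $u\in(0,1)$, and let $\Theta_\infty(u)$ be the random variable defined in the context. Then for $k=1,2,\dots$, $$E[\Theta_\infty^k(u)]=\frac{1-p}{1-pu^k-(1-p)(1-u)^k}\sum_{j=0}^{k-1}\binom kj u^{k-j}(1-u)^jE[\Theta_\infty^j(u)].$$
   Context: Let $G_0,G_1,\dots$ be IID random variables with $P(G_0=n)=p^{n-1}(1-p)$ for $n\in\{1,2,\dots\}$, let $T_k=G_0+\dots+G_k$, and define $\Theta_\infty(u)=\sum_{k=0}^\infty u^{T_k}\left(\frac{1-u}{u}\right)^k$. (Its law is the unique probability measure $\mu_u$ on $[0,1]$ with $\mu_u=(1-p)\mu_u\circ S_0^{-1}+p\,\mu_u\circ S_1^{-1}$, where $S_0(x)=u+(1-u)x$, $S_1(x)=ux$.) Here $E[\Theta_\infty^0(u)]=1$. *)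

theory Defs
  imports "HOL-Probability.Probability"
begin

definition T_sum :: "(nat \<Rightarrow> 'a \<Rightarrow> nat) \<Rightarrow> nat \<Rightarrow> 'a \<Rightarrow> nat" where
  "T_sum G k \<omega> = (\<Sum>i\<le>k. G i \<omega>)"

definition Theta_inf :: "real \<Rightarrow> (nat \<Rightarrow> 'a \<Rightarrow> nat) \<Rightarrow> 'a \<Rightarrow> real" where
  "Theta_inf u G \<omega> = (\<Sum>k. u ^ (T_sum G k \<omega>) * ((1 - u) / u) ^ k)"

end

theory Submission
  imports Defs
begin

definition Th :: "real \<Rightarrow> (nat \<Rightarrow> nat) \<Rightarrow> real" where
  "Th u x = (\<Sum>k. u ^ (\<Sum>i\<le>k. x i) * ((1 - u) / u) ^ k)"

lemma Th_term_bound: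
  fixes u :: real
  assumes "0 < u" "u < 1" "\<And>i. x i \<ge> 1"
  shows "0 \<le> u ^ (\<Sum>i\<le>k. x i) * ((1 - u) / u) ^ k \<and> u ^ (\<Sum>i\<le>k. x i) * ((1 - u) / u) ^ k \<le> u * (1 - u) ^ k"
proof -
  have "Suc k \<le> (\<Sum>i\<le>k. x i)"
  proof -
    have "(\<Sum>i\<le>k. (1::nat)) \<le> (\<Sum>i\<le>k. x i)" by (rule sum_mono) (use assms in auto)
    then show ?thesis by simp
  qed
  then have "u ^ (\<Sum>i\<le>k. x i) \<le> u ^ Suc k" using assms by (intro power_decreasing[of "Suc k" _ u]) auto
  then have "u ^ (\<Sum>i\<le>k. x i) * ((1 - u) / u) ^ k \<le> u ^ Suc k * ((1 - u) / u) ^ k"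
    using assms by (intro mult_right_mono) auto
  also have "\<dots> = u * (1 - u) ^ k" using assms by (simp add: power_divide)
  finally show ?thesis using assms by auto
qed

lemma Th_summable:
  fixes u :: real
  assumes "0 < u" "u < 1" "\<And>i. x i \<ge> 1"
  shows "summable (\<lambda>k. u ^ (\<Sum>i\<le>k. x i) * ((1 - u) / u) ^ k)"
proof -
  have s: "summable (\<lambda>k. u * (1 - u) ^ k)" using assms by (intro summable_mult summable_geometric) auto
  show ?thesis
    by (rule summable_comparison_test'[OF s, of 0]) (use Th_term_bound[OF assms] in auto)
qed

lemma Th_bounds:
  assumes "0 < u" "u < 1" "\<And>i. x i \<ge> 1"
  shows "0 \<le> Th u x" "Th u x \<le> 1"
proof -
  show "0 \<le> Th u x" unfolding Th_def
    using Th_term_bound[OF assms] Th_summable[OF assms] by (intro suminf_nonneg) auto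
  have s: "summable (\<lambda>k. u * (1 - u) ^ k)" using assms by (intro summable_mult summable_geometric) auto
  have "Th u x \<le> (\<Sum>k. u * (1 - u) ^ k)" unfolding Th_def
    using Th_term_bound[OF assms] Th_summable[OF assms] s by (intro suminf_le) auto
  also have "\<dots> = u * (1 / (1 - (1 - u)))" using assms
    by (subst suminf_mult) (auto simp: suminf_geometric)
  also have "\<dots> = 1" using assms by simp
  finally show "Th u x \<le> 1" .
qed

lemma Th_rec:
  assumes "0 < u" "u < 1" "\<And>i. x i \<ge> 1"
  shows "Th u x = u ^ (x 0 - 1) * (u + (1 - u) * Th u (\<lambda>i. x (Suc i)))"
proof -
  let ?f = "\<lambda>k. u ^ (\<Sum>i\<le>k. x i) * ((1 - u) / u) ^ k"
  let ?g = "\<lambda>k. u ^ (\<Sum>i\<le>k. x (Suc i)) * ((1 - u) / u) ^ k"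
  have sf: "summable ?f" by (rule Th_summable[OF assms])
  have sg: "summable ?g" by (rule Th_summable) (use assms in auto)
  have fs: "?f (Suc k) = u ^ x 0 * ((1 - u) / u) * ?g k" for k
    unfolding sum.atMost_Suc_shift by (simp add: power_add)
  have "Th u x = ?f 0 + (\<Sum>k. ?f (Suc k))" unfolding Th_def using suminf_split_head[OF sf] by simp
  also have "(\<Sum>k. ?f (Suc k)) = u ^ x 0 * ((1 - u) / u) * Th u (\<lambda>i. x (Suc i))"
    unfolding fs Th_def by (rule suminf_mult[OF sg])
  also have "?f 0 = u ^ x 0" by simp
  also have "u ^ x 0 = u ^ (x 0 - 1) * u"
    using assms(3)[of 0] by (metis Suc_diff_1 less_le_trans zero_less_one power_Suc2)
  finally have e: "Th u x = u ^ (x 0 - 1) * u + u ^ (x 0 - 1) * u * ((1 - u) / u) * Th u (\<lambda>i. x (Suc i))" .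
  have "u * ((1 - u) / u) = 1 - u" using assms by simp
  then have "u ^ (x 0 - 1) * u * ((1 - u) / u) * Th u (\<lambda>i. x (Suc i)) = u ^ (x 0 - 1) * ((1 - u) * Th u (\<lambda>i. x (Suc i)))"
    by (metis mult.assoc)
  then show ?thesis unfolding e by (simp add: distrib_left)
qed

lemma Th_meas:
  fixes u :: real and I :: "nat set"
  assumes "\<And>i. j i \<in> I"
  shows "(\<lambda>x. Th u (\<lambda>i. x (j i))) \<in> borel_measurable (PiM I (\<lambda>_. count_space UNIV))"
proof -
  have c: "(\<lambda>x. u ^ x (j i)) \<in> borel_measurable (PiM I (\<lambda>_. count_space UNIV))" for i
    by (rule measurable_compose[OF measurable_component_singleton[OF assms]]) simp
  have "(\<lambda>x. \<Sum>k. (\<Prod>i\<le>k. u ^ x (j i)) * ((1 - u) / u) ^ k) \<in> borel_measurable (PiM I (\<lambda>_. count_space UNIV))"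
    using c by measurable
  then show ?thesis unfolding Th_def power_sum .
qed

definition ThG :: "real \<Rightarrow> (nat \<Rightarrow> 'a \<Rightarrow> nat) \<Rightarrow> nat \<Rightarrow> 'a \<Rightarrow> real" where
  "ThG u G m \<omega> = Th u (\<lambda>i. G (m + i) \<omega>)"

context prob_space
begin

context
  fixes G :: "nat \<Rightarrow> 'a \<Rightarrow> nat" and p u :: real
  assumes ind: "indep_vars (\<lambda>_. count_space UNIV) G UNIV"
    and p: "0 < p" "p < 1" and u: "0 < u" "u < 1"
    and G1: "\<And>i \<omega>. \<omega> \<in> space M \<Longrightarrow> G i \<omega> \<ge> 1"
    and Gd: "\<And>i n. n \<ge> 1 \<Longrightarrow> measure M {\<omega> \<in> space M. G i \<omega> = n} = p ^ (n - 1) * (1 - p)"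
begin

lemma meas_G: "G i \<in> measurable M (count_space UNIV)"
  using ind unfolding indep_vars_def by auto

lemma meas_vec: "(\<lambda>\<omega>. \<lambda>i\<in>I. G i \<omega>) \<in> measurable M (PiM I (\<lambda>_. count_space UNIV))"
  by (rule measurable_restrict) (rule meas_G)

lemma ThG_meas: "ThG u G m \<in> borel_measurable M"
proof -
  have "(\<lambda>\<omega>. (\<lambda>x. Th u (\<lambda>i. x (m + i))) (\<lambda>i\<in>UNIV. G i \<omega>)) \<in> borel_measurable M"
    by (rule measurable_compose[OF meas_vec Th_meas]) auto
  then show ?thesis unfolding ThG_def[abs_def] by simp
qed

lemma ThG_bounds:
  assumes "\<omega> \<in> space M"
  shows "0 \<le> ThG u G m \<omega>" "ThG u G m \<omega> \<le> 1"
  unfolding ThG_def using Th_bounds[OF u, of "\<lambda>i. G (m + i) \<omega>"] G1[OF assms] by auto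

lemma ThG_pow_int: "integrable M (\<lambda>\<omega>. ThG u G m \<omega> ^ j)"
proof (rule integrable_const_bound[where B=1])
  show "AE x in M. norm (ThG u G m x ^ j) \<le> 1"
    using ThG_bounds by (auto intro!: power_le_one)
  show "(\<lambda>\<omega>. ThG u G m \<omega> ^ j) \<in> borel_measurable M" using ThG_meas by measurable
qed

lemma G_set: "{\<omega> \<in> space M. G m \<omega> = n} \<in> events"
proof -
  have "{\<omega> \<in> space M. G m \<omega> = n} = G m -` {n} \<inter> space M" by auto
  then show ?thesis using measurable_sets[OF meas_G] by simp
qed

lemma E_geo:
  assumes q: "0 \<le> q" "q \<le> 1"
  shows "expectation (\<lambda>\<omega>. q ^ (G m \<omega> - 1)) = (1 - p) / (1 - p * q)"
proof -
  let ?f = "\<lambda>n \<omega>. q ^ n * indicator {\<omega> \<in> space M. G m \<omega> = Suc n} \<omega>"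
  have int: "integrable M (?f n)" for n
    using G_set[of m "Suc n"] q by (intro integrable_const_bound[where B="q ^ n"]) (auto simp: indicator_def)
  have intf: "integral\<^sup>L M (?f n) = (1 - p) * (p * q) ^ n" for n
  proof -
    have "{\<omega> \<in> space M. G m \<omega> = Suc n} \<inter> space M = {\<omega> \<in> space M. G m \<omega> = Suc n}" by auto
    then show ?thesis using Gd[of "Suc n" m] by (simp add: power_mult_distrib)
  qed
  have pt: "?f n \<omega> = (if n = G m \<omega> - 1 then q ^ n else 0)" if "\<omega> \<in> space M" for n \<omega>
    using G1[OF that, of m] that by (auto simp: indicator_def)
  have sm: "AE \<omega> in M. summable (\<lambda>n. norm (?f n \<omega>))"
  proof (rule AE_I2)
    fix \<omega> assume w: "\<omega> \<in> space M"
    have "(\<lambda>n. norm (?f n \<omega>)) = (\<lambda>n. if n = G m \<omega> - 1 then q ^ n else 0)"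
      using pt[OF w] q by (auto simp: fun_eq_iff)
    then show "summable (\<lambda>n. norm (?f n \<omega>))" by simp
  qed
  have pq: "0 \<le> p * q" "p * q < 1" proof -
    show "0 \<le> p * q" using p q by auto
    have "p * q \<le> p * 1" using p q by (intro mult_left_mono) auto
    then show "p * q < 1" using p by linarith
  qed
  have geo: "(\<lambda>n. (1 - p) * (p * q) ^ n) sums ((1 - p) * (1 / (1 - p * q)))"
    by (rule sums_mult[OF geometric_sums]) (use pq in auto)
  have sn: "summable (\<lambda>n. \<integral>\<omega>. norm (?f n \<omega>) \<partial>M)"
  proof -
    have "(\<lambda>n. \<integral>\<omega>. norm (?f n \<omega>) \<partial>M) = (\<lambda>n. integral\<^sup>L M (?f n))"
      using q by (intro ext Bochner_Integration.integral_cong) auto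
    then show ?thesis unfolding intf by (metis sums_summable[OF geo])
  qed
  have "(\<lambda>n. integral\<^sup>L M (?f n)) sums (\<integral>\<omega>. (\<Sum>n. ?f n \<omega>) \<partial>M)"
    by (rule sums_integral[OF int sm sn])
  moreover have "(\<integral>\<omega>. (\<Sum>n. ?f n \<omega>) \<partial>M) = expectation (\<lambda>\<omega>. q ^ (G m \<omega> - 1))"
  proof (rule Bochner_Integration.integral_cong[OF refl])
    fix \<omega> assume w: "\<omega> \<in> space M"
    have "(\<lambda>n. ?f n \<omega>) sums (q ^ (G m \<omega> - 1))"
      using sums_single[of "G m \<omega> - 1" "\<lambda>n. q ^ n"] pt[OF w] by simp
    then show "(\<Sum>n. ?f n \<omega>) = q ^ (G m \<omega> - 1)" by (rule sums_unique[symmetric])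
  qed
  ultimately have "(\<lambda>n. (1 - p) * (p * q) ^ n) sums expectation (\<lambda>\<omega>. q ^ (G m \<omega> - 1))"
    using intf by simp
  with geo show ?thesis by (simp add: sums_unique2)
qed

lemma step:
  "expectation (\<lambda>\<omega>. ThG u G m \<omega> ^ k) = (1 - p) / (1 - p * u ^ k) *
     (\<Sum>j\<le>k. real (k choose j) * u ^ (k - j) * (1 - u) ^ j * expectation (\<lambda>\<omega>. ThG u G (Suc m) \<omega> ^ j))"
proof -
  let ?X1 = "\<lambda>\<omega>. (u ^ k) ^ (G m \<omega> - 1)"
  let ?X2 = "\<lambda>\<omega>. (u + (1 - u) * ThG u G (Suc m) \<omega>) ^ k"
  have rec: "ThG u G m \<omega> ^ k = ?X1 \<omega> * ?X2 \<omega>" if w: "\<omega> \<in> space M" for \<omega>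
  proof -
    have "ThG u G m \<omega> = u ^ (G m \<omega> - 1) * (u + (1 - u) * ThG u G (Suc m) \<omega>)"
      unfolding ThG_def using Th_rec[OF u, of "\<lambda>i. G (m + i) \<omega>"] G1[OF w] by simp
    then have "ThG u G m \<omega> ^ k = (u ^ (G m \<omega> - 1)) ^ k * ?X2 \<omega>" by (simp add: power_mult_distrib)
    also have "(u ^ (G m \<omega> - 1)) ^ k = ?X1 \<omega>" by (metis power_mult mult.commute)
    finally show ?thesis .
  qed
  have iv: "indep_var (PiM {m} (\<lambda>_. count_space UNIV)) (\<lambda>\<omega>. restrict (\<lambda>i. G i \<omega>) {m})
      (PiM {Suc m..} (\<lambda>_. count_space UNIV)) (\<lambda>\<omega>. restrict (\<lambda>i. G i \<omega>) {Suc m..})"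
    by (rule indep_var_restrict[OF ind]) auto
  have Y1: "(\<lambda>x. (u ^ k) ^ (x m - 1)) \<in> borel_measurable (PiM {m} (\<lambda>_. count_space (UNIV :: nat set)))"
    by (rule measurable_compose[of "\<lambda>x. x m" _ "count_space UNIV" "\<lambda>n. (u ^ k) ^ (n - 1)"])
      (auto intro: measurable_component_singleton)
  have Y2: "(\<lambda>x. (u + (1 - u) * Th u (\<lambda>i. x (Suc m + i))) ^ k) \<in> borel_measurable (PiM {Suc m..} (\<lambda>_. count_space (UNIV :: nat set)))"
    using Th_meas[of "\<lambda>i. Suc m + i" "{Suc m..}" u] by measurable
  have iv2: "indep_var borel ?X1 borel ?X2"
    using indep_var_compose[OF iv Y1 Y2] by (simp add: o_def ThG_def)
  have m1: "?X1 \<in> borel_measurable M"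
    by (rule measurable_compose[OF meas_G, where g="\<lambda>n. (u ^ k) ^ (n - 1)"]) auto
  have i1: "integrable M ?X1"
  proof (rule integrable_const_bound[where B=1])
    show "AE x in M. norm (?X1 x) \<le> 1" using u by (auto intro!: power_le_one)
  qed (rule m1)
  have i2: "integrable M ?X2"
  proof (rule integrable_const_bound[where B=1])
    have "0 \<le> u + (1 - u) * ThG u G (Suc m) x \<and> u + (1 - u) * ThG u G (Suc m) x \<le> 1" if "x \<in> space M" for x
    proof -
      have "(1 - u) * ThG u G (Suc m) x \<le> (1 - u) * 1"
        using ThG_bounds[OF that] u by (intro mult_left_mono) auto
      moreover have "0 \<le> (1 - u) * ThG u G (Suc m) x"
        using ThG_bounds[OF that] u by auto
      ultimately show ?thesis using u by (smt (verit))
    qed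
    then show "AE x in M. norm (?X2 x) \<le> 1" by (auto intro!: power_le_one)
    show "?X2 \<in> borel_measurable M" using ThG_meas by measurable
  qed
  have "expectation (\<lambda>\<omega>. ThG u G m \<omega> ^ k) = expectation (\<lambda>\<omega>. ?X1 \<omega> * ?X2 \<omega>)"
    using rec by (intro Bochner_Integration.integral_cong) auto
  also have "\<dots> = expectation ?X1 * expectation ?X2"
    by (rule indep_var_lebesgue_integral[OF iv2 i1 i2])
  also have "expectation ?X1 = (1 - p) / (1 - p * u ^ k)"
    using u by (intro E_geo) (auto intro: power_le_one)
  also have "expectation ?X2 = expectation (\<lambda>\<omega>. \<Sum>j\<le>k. real (k choose j) * u ^ (k - j) * (1 - u) ^ j * ThG u G (Suc m) \<omega> ^ j)"
  proof (intro Bochner_Integration.integral_cong refl)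
    fix x
    have "?X2 x = ((1 - u) * ThG u G (Suc m) x + u) ^ k" by (simp add: add.commute)
    also have "\<dots> = (\<Sum>j\<le>k. of_nat (k choose j) * ((1 - u) * ThG u G (Suc m) x) ^ j * u ^ (k - j))"
      by (rule binomial_ring)
    also have "\<dots> = (\<Sum>j\<le>k. real (k choose j) * u ^ (k - j) * (1 - u) ^ j * ThG u G (Suc m) x ^ j)"
      by (simp add: power_mult_distrib mult_ac)
    finally show "?X2 x = (\<Sum>j\<le>k. real (k choose j) * u ^ (k - j) * (1 - u) ^ j * ThG u G (Suc m) x ^ j)" .
  qed
  also have "\<dots> = (\<Sum>j\<le>k. real (k choose j) * u ^ (k - j) * (1 - u) ^ j * expectation (\<lambda>\<omega>. ThG u G (Suc m) \<omega> ^ j))"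
    using ThG_pow_int by (subst Bochner_Integration.integral_sum) auto
  finally show ?thesis .
qed

lemma step2:
  "expectation (\<lambda>\<omega>. ThG u G m \<omega> ^ k) = (1 - p) / (1 - p * u ^ k) *
     ((\<Sum>j<k. real (k choose j) * u ^ (k - j) * (1 - u) ^ j * expectation (\<lambda>\<omega>. ThG u G (Suc m) \<omega> ^ j))
      + (1 - u) ^ k * expectation (\<lambda>\<omega>. ThG u G (Suc m) \<omega> ^ k))"
proof -
  have sp: "(\<Sum>j\<le>k. f j) = (\<Sum>j<k. f j) + f k" for f :: "nat \<Rightarrow> real"
  proof -
    have "{..k} = insert k {..<k}" by auto
    then show ?thesis by (simp add: add.commute)
  qed
  show ?thesis by (subst step[of m k]) (simp only: sp, simp)
qed

lemma E_bounds: "0 \<le> expectation (\<lambda>\<omega>. ThG u G m \<omega> ^ k)" "expectation (\<lambda>\<omega>. ThG u G m \<omega> ^ k) \<le> 1"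
proof -
  show "0 \<le> expectation (\<lambda>\<omega>. ThG u G m \<omega> ^ k)"
    using ThG_bounds by (intro integral_nonneg_AE) auto
  have "expectation (\<lambda>\<omega>. ThG u G m \<omega> ^ k) \<le> expectation (\<lambda>\<omega>. 1)"
    using ThG_bounds ThG_pow_int by (intro integral_mono_AE) (auto intro!: power_le_one)
  then show "expectation (\<lambda>\<omega>. ThG u G m \<omega> ^ k) \<le> 1" using prob_space by simp
qed

lemma den_pos:
  assumes "k \<ge> 1"
  shows "0 < 1 - p * u ^ k" "0 < 1 - p * u ^ k - (1 - p) * (1 - u) ^ k"
proof -
  have a: "u ^ k < 1" using u assms by (subst power_less_one_iff) auto
  have b: "(1 - u) ^ k < 1" using u assms by (subst power_less_one_iff) auto
  have "p * u ^ k < p * 1" using a p by (intro mult_strict_left_mono) auto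
  then show "0 < 1 - p * u ^ k" using p by linarith
  have "(1 - p) * (1 - u) ^ k < (1 - p) * 1" using b p by (intro mult_strict_left_mono) auto
  with \<open>p * u ^ k < p * 1\<close> have "p * u ^ k + (1 - p) * (1 - u) ^ k < p * 1 + (1 - p) * 1"
    by (rule add_strict_mono)
  then show "0 < 1 - p * u ^ k - (1 - p) * (1 - u) ^ k" by simp
qed

lemma const: "expectation (\<lambda>\<omega>. ThG u G m \<omega> ^ k) = expectation (\<lambda>\<omega>. ThG u G 0 \<omega> ^ k)"
proof (induction k arbitrary: m rule: less_induct)
  case (less k)
  show ?case
  proof (cases "k = 0")
    case True then show ?thesis by simp
  next
    case False
    then have k1: "k \<ge> 1" by simp
    define c where "c = (1 - p) / (1 - p * u ^ k)"
    define al where "al = c * (1 - u) ^ k"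
    define S0 where "S0 = (\<Sum>j<k. real (k choose j) * u ^ (k - j) * (1 - u) ^ j * expectation (\<lambda>\<omega>. ThG u G 0 \<omega> ^ j))"
    define be where "be = c * S0"
    define a where "a n = expectation (\<lambda>\<omega>. ThG u G n \<omega> ^ k)" for n
    have rec: "a n = al * a (Suc n) + be" for n
    proof -
      have eqS: "(\<Sum>j<k. real (k choose j) * u ^ (k - j) * (1 - u) ^ j * expectation (\<lambda>\<omega>. ThG u G (Suc n) \<omega> ^ j)) = S0"
        unfolding S0_def by (intro sum.cong refl arg_cong2[where f="(*)"] refl) (metis lessThan_iff less.IH)
      have "a n = c * (S0 + (1 - u) ^ k * a (Suc n))"
        unfolding a_def c_def step2[of n k] eqS ..
      then show ?thesis unfolding al_def be_def by (simp only: distrib_left mult.assoc add.commute)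
    qed
    have dp: "0 < 1 - p * u ^ k" "0 < 1 - p * u ^ k - (1 - p) * (1 - u) ^ k" using den_pos[OF k1] by auto
    have al0: "0 \<le> al" unfolding al_def c_def using p u dp by auto
    have al1: "al < 1"
    proof -
      have "(1 - p) * (1 - u) ^ k < 1 - p * u ^ k" using dp by linarith
      then have "(1 - p) * (1 - u) ^ k / (1 - p * u ^ k) < 1" using dp by simp
      then show ?thesis unfolding al_def c_def by simp
    qed
    define L where "L = be / (1 - al)"
    have beL: "be = L * (1 - al)" unfolding L_def using al1 by simp
    have r1: "a n - L = al * (a (Suc n) - L)" for n
      using rec[of n] unfolding beL by (simp add: algebra_simps)
    have rN: "a n - L = al ^ N * (a (n + N) - L)" for N n
    proof (induction N arbitrary: n)
      case 0 then show ?case by simp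
    next
      case (Suc N)
      have "a n - L = al * (al ^ N * (a (Suc n + N) - L))" using r1[of n] Suc[of "Suc n"] by simp
      then show ?case by simp
    qed
    have abnd: "\<bar>a n - L\<bar> \<le> 1 + \<bar>L\<bar>" for n
      using E_bounds[of n k] unfolding a_def by linarith
    have le: "\<bar>a m - L\<bar> \<le> al ^ N * (1 + \<bar>L\<bar>)" for N
    proof -
      have "\<bar>a m - L\<bar> = al ^ N * \<bar>a (m + N) - L\<bar>" using rN[of m N] al0 by (simp add: abs_mult)
      also have "\<dots> \<le> al ^ N * (1 + \<bar>L\<bar>)" using abnd al0 by (intro mult_left_mono) auto
      finally show ?thesis .
    qed
    have lim: "(\<lambda>N. al ^ N * (1 + \<bar>L\<bar>)) \<longlonglongrightarrow> 0 * (1 + \<bar>L\<bar>)"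
      by (intro tendsto_mult LIMSEQ_power_zero tendsto_const) (use al0 al1 in auto)
    have "\<bar>a m - L\<bar> \<le> 0 * (1 + \<bar>L\<bar>)"
      by (rule LIMSEQ_le_const[OF lim]) (use le in auto)
    then have "a m = L" by simp
    moreover have "a 0 = L"
    proof -
      have "\<bar>a 0 - L\<bar> \<le> al ^ N * (1 + \<bar>L\<bar>)" for N
      proof -
        have "\<bar>a 0 - L\<bar> = al ^ N * \<bar>a (0 + N) - L\<bar>" using rN[of 0 N] al0 by (simp add: abs_mult)
        also have "\<dots> \<le> al ^ N * (1 + \<bar>L\<bar>)" using abnd al0 by (intro mult_left_mono) auto
        finally show ?thesis .
      qed
      then have "\<bar>a 0 - L\<bar> \<le> 0 * (1 + \<bar>L\<bar>)"
        by (intro LIMSEQ_le_const[OF lim]) auto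
      then show ?thesis by simp
    qed
    ultimately show ?thesis unfolding a_def by simp
  qed
qed

lemma main:
  assumes k1: "k \<ge> 1"
  shows "expectation (\<lambda>\<omega>. ThG u G 0 \<omega> ^ k) =
    (1 - p) / (1 - p * u ^ k - (1 - p) * (1 - u) ^ k) *
    (\<Sum>j<k. real (k choose j) * u ^ (k - j) * (1 - u) ^ j * expectation (\<lambda>\<omega>. ThG u G 0 \<omega> ^ j))"
proof -
  define S where "S = (\<Sum>j<k. real (k choose j) * u ^ (k - j) * (1 - u) ^ j * expectation (\<lambda>\<omega>. ThG u G 0 \<omega> ^ j))"
  define e where "e = expectation (\<lambda>\<omega>. ThG u G 0 \<omega> ^ k)"
  have dp: "0 < 1 - p * u ^ k" "0 < 1 - p * u ^ k - (1 - p) * (1 - u) ^ k" using den_pos[OF k1] by auto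
  have "e = (1 - p) / (1 - p * u ^ k) * ((\<Sum>j<k. real (k choose j) * u ^ (k - j) * (1 - u) ^ j * expectation (\<lambda>\<omega>. ThG u G (Suc 0) \<omega> ^ j))
      + (1 - u) ^ k * expectation (\<lambda>\<omega>. ThG u G (Suc 0) \<omega> ^ k))"
    unfolding e_def by (rule step2)
  then have "e = (1 - p) / (1 - p * u ^ k) * (S + (1 - u) ^ k * e)"
    unfolding e_def S_def const[of "Suc 0"] .
  then have "e * (1 - p * u ^ k) = (1 - p) * (S + (1 - u) ^ k * e)" using dp by (simp add: field_simps)
  then have "e * (1 - p * u ^ k - (1 - p) * (1 - u) ^ k) = (1 - p) * S" by (simp add: algebra_simps)
  then have "e = (1 - p) * S / (1 - p * u ^ k - (1 - p) * (1 - u) ^ k)" using dp by (simp add: field_simps)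
  then show ?thesis unfolding e_def S_def by simp
qed

end
end

lemma Theta_ThG: "Theta_inf u G = ThG u G 0"
  by (simp add: fun_eq_iff Theta_inf_def T_sum_def ThG_def Th_def)

theorem proposition1:
  fixes M :: "'a measure" and G :: "nat \<Rightarrow> 'a \<Rightarrow> nat" and p u :: real and k :: nat
  assumes "prob_space M"
    and "0 < p" "p < 1" "0 < u" "u < 1"
    and "prob_space.indep_vars M (\<lambda>_. count_space UNIV) G UNIV"
    and "\<And>i \<omega>. \<omega> \<in> space M \<Longrightarrow> G i \<omega> \<ge> 1"
    and "\<And>i n. n \<ge> 1 \<Longrightarrow> measure M {\<omega> \<in> space M. G i \<omega> = n} = p ^ (n - 1) * (1 - p)"
    and "k \<ge> 1"
  shows "prob_space.expectation M (\<lambda>\<omega>. Theta_inf u G \<omega> ^ k) =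
    (1 - p) / (1 - p * u ^ k - (1 - p) * (1 - u) ^ k) *
    (\<Sum>j<k. real (k choose j) * u ^ (k - j) * (1 - u) ^ j *
       prob_space.expectation M (\<lambda>\<omega>. Theta_inf u G \<omega> ^ j))"
proof -
  interpret prob_space M by fact
  show ?thesis unfolding Theta_ThG
    by (rule main[OF assms(6,2,3,4,5,7,8,9)])
qed

end
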